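(* Let $M$ be a strong $r$-helix hypersurface in $E^n$ with unit normal vector field $N$ and space of helix directions $H(M)\subset\mathbb{R}^n$. Let $\alpha: I\subset\mathbb{R}\to M$ be a curve on $M$, and suppose there exists $d_j\in H(M)$ such that $d_j\notin T_pM$ for every $p=\alpha(t)$, $t\in I$. Let $\eta: M\to S^{n-1}$, $\eta(P)=N(P)$, be the Gauss transformation of $M$. Then the curve $\beta(t)=\eta(\alpha(t))=N|_{\alpha(t)}$ is not a geodesic curve on the unit hypersphere $S^{n-1}\subset E^n$.
   Context: $\langle\cdot,\cdot\rangle$ is the standard inner product on $E^n=\mathbb{R}^n$. For a hypersurface $M\subset\mathbb{R}^n$ with unit normal $N$, a vector $d$ is a helix direction of $M$ if the angle between $d$ and $T_pM$ is the same for all $p\in M$, equivalently $\langle N,d\rangle$ is constant on $M$. $H(M)$ is the set of helix directions; $M$ is a strong $r$-helix if $H(M)$ is an $r$-dimensional linear subspace of $\mathbb{R}^n$. A curve on $S^{n-1}$ is a geodesic of $S^{n-1}$ if its second derivative is normal to $S^{n-1}$ at each point. *)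

theory Defs
  imports "HOL-Analysis.Analysis"
begin

text \<open>Ambient space E^n is a Euclidean space 'a with DIM('a) = n.
  Tangent space of a set M at p: velocities at 0 of differentiable curves in M through p.\<close>
definition tangent_space :: "'a::euclidean_space set \<Rightarrow> 'a \<Rightarrow> 'a set" where
  "tangent_space M p = {v. \<exists>\<gamma> e. e > 0 \<and> (\<forall>t\<in>{-e<..<e}. \<gamma> t \<in> M) \<and> \<gamma> 0 = p \<and>
                            (\<gamma> has_vector_derivative v) (at 0)}"

definition hypersurface :: "'a::euclidean_space set \<Rightarrow> ('a \<Rightarrow> 'a) \<Rightarrow> bool" where
  "hypersurface M N \<longleftrightarrow> M \<noteq> {} \<and> N differentiable_on M \<and>
     (\<forall>p\<in>M. subspace (tangent_space M p) \<and> dim (tangent_space M p) = DIM('a) - 1 \<and>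
             norm (N p) = 1 \<and> (\<forall>v\<in>tangent_space M p. N p \<bullet> v = 0))"

definition helix_dirs :: "'a::euclidean_space set \<Rightarrow> ('a \<Rightarrow> 'a) \<Rightarrow> 'a set" where
  "helix_dirs M N = {d. \<exists>c. \<forall>p\<in>M. N p \<bullet> d = c}"

definition strong_helix :: "nat \<Rightarrow> 'a::euclidean_space set \<Rightarrow> ('a \<Rightarrow> 'a) \<Rightarrow> bool" where
  "strong_helix r M N \<longleftrightarrow> subspace (helix_dirs M N) \<and> dim (helix_dirs M N) = r"

text \<open>A (regular) geodesic of the unit sphere S^{n-1} on the parameter set I: the curve lies
  on the sphere, is twice differentiable with nonvanishing velocity, and its second
  derivative is normal to the sphere, i.e. orthogonal to T_q S^{n-1} = q^perp at q = beta t.\<close>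
definition sphere_geodesic :: "(real \<Rightarrow> 'a::euclidean_space) \<Rightarrow> real set \<Rightarrow> bool" where
  "sphere_geodesic \<beta> I \<longleftrightarrow> (\<forall>t\<in>I. \<beta> t \<in> sphere 0 1) \<and>
     (\<exists>\<beta>' \<beta>''. \<forall>t\<in>I. (\<beta> has_vector_derivative \<beta>' t) (at t) \<and> \<beta>' t \<noteq> 0 \<and>
        (\<beta>' has_vector_derivative \<beta>'' t) (at t) \<and>
        (\<forall>v. v \<bullet> \<beta> t = 0 \<longrightarrow> \<beta>'' t \<bullet> v = 0))"

end

theory Submission
  imports Defs
begin

lemma vd_inner:
  fixes f g :: "real \<Rightarrow> 'a::euclidean_space"
  assumes "(f has_vector_derivative f') (at t)" "(g has_vector_derivative g') (at t)"
  shows "((\<lambda>s. f s \<bullet> g s) has_real_derivative (f t \<bullet> g' + f' \<bullet> g t)) (at t)"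
proof -
  have "((\<lambda>s. f s \<bullet> g s) has_derivative (\<lambda>h. f t \<bullet> (h *\<^sub>R g') + (h *\<^sub>R f') \<bullet> g t)) (at t)"
    using has_derivative_inner[OF assms[unfolded has_vector_derivative_def]] .
  then show ?thesis
    unfolding has_field_derivative_def
    by (rule has_derivative_eq_rhs) (auto simp: algebra_simps)
qed

lemma deriv_zero_local:
  fixes g :: "real \<Rightarrow> real"
  assumes "(g has_real_derivative D) (at t)" "open I" "t\<in>I" "\<forall>s\<in>I. g s = k"
  shows "D = 0"
proof -
  have "((\<lambda>s. k) has_real_derivative D) (at t)"
    using has_field_derivative_transform_within_open[OF assms(1) assms(2) assms(3)] assms(4) by auto
  then show ?thesis using DERIV_const DERIV_unique by blast
qed

theorem theorem3p3:
  fixes M :: "'a::euclidean_space set" and N :: "'a \<Rightarrow> 'a"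
    and \<alpha> :: "real \<Rightarrow> 'a" and I :: "real set" and r :: nat and dj :: 'a
  assumes "DIM('a) \<ge> 2"
    and "hypersurface M N"
    and "strong_helix r M N"
    and "is_interval I" and "open I" and "I \<noteq> {}"
    and "\<alpha> ` I \<subseteq> M" and "\<alpha> differentiable_on I"
    and "dj \<in> helix_dirs M N"
    and "\<forall>t\<in>I. dj \<notin> tangent_space M (\<alpha> t)"
  shows "\<not> sphere_geodesic (\<lambda>t. N (\<alpha> t)) I"
proof
  define \<beta> where "\<beta> = (\<lambda>t. N (\<alpha> t))"
  assume "sphere_geodesic (\<lambda>t. N (\<alpha> t)) I"
  then have sph: "\<forall>t\<in>I. \<beta> t \<in> sphere 0 1" and
    "\<exists>\<beta>' \<beta>''. \<forall>t\<in>I. (\<beta> has_vector_derivative \<beta>' t) (at t) \<and> \<beta>' t \<noteq> 0 \<and>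
        (\<beta>' has_vector_derivative \<beta>'' t) (at t) \<and>
        (\<forall>v. v \<bullet> \<beta> t = 0 \<longrightarrow> \<beta>'' t \<bullet> v = 0)"
    unfolding sphere_geodesic_def \<beta>_def by auto
  then obtain \<beta>' \<beta>'' where G: "\<And>t. t\<in>I \<Longrightarrow> (\<beta> has_vector_derivative \<beta>' t) (at t) \<and> \<beta>' t \<noteq> 0 \<and>
        (\<beta>' has_vector_derivative \<beta>'' t) (at t) \<and>
        (\<forall>v. v \<bullet> \<beta> t = 0 \<longrightarrow> \<beta>'' t \<bullet> v = 0)" by blast
  obtain t0 where t0: "t0 \<in> I" using assms(6) by blast
  obtain c where c: "\<forall>p\<in>M. N p \<bullet> dj = c" using assms(9) unfolding helix_dirs_def by blast
  have bc: "\<forall>s\<in>I. \<beta> s \<bullet> dj = c" using c assms(7) unfolding \<beta>_def by auto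
  have "c \<noteq> 0"
  proof
    assume c0: "c = 0"
    define p where "p = \<alpha> t0"
    have pM: "p \<in> M" using assms(7) t0 p_def by auto
    define T where "T = tangent_space M p"
    have sT: "subspace T" and dT: "dim T = DIM('a) - 1" and nN: "norm (N p) = 1"
      and oT: "\<forall>v\<in>T. N p \<bullet> v = 0"
      using assms(2) pM unfolding hypersurface_def T_def by auto
    have N0: "N p \<noteq> 0" using nN by auto
    have sub: "T \<subseteq> {x. N p \<bullet> x = 0}" using oT by auto
    have "T = {x. N p \<bullet> x = 0}"
      by (rule subspace_dim_equal[OF sT subspace_hyperplane sub]) (simp add: dim_hyperplane[OF N0] dT)
    moreover have "dj \<in> {x. N p \<bullet> x = 0}" using c pM c0 by auto
    ultimately show False using assms(10) t0 T_def p_def by auto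
  qed
  have d1: "\<forall>s\<in>I. \<beta>' s \<bullet> dj = 0"
  proof
    fix s assume s: "s \<in> I"
    have "((\<lambda>s. \<beta> s \<bullet> dj) has_real_derivative (\<beta> s \<bullet> 0 + \<beta>' s \<bullet> dj)) (at s)"
      using vd_inner[OF conjunct1[OF G[OF s]] has_vector_derivative_const] .
    then show "\<beta>' s \<bullet> dj = 0" using deriv_zero_local[OF _ assms(5) s bc] by simp
  qed
  have d2: "\<beta>'' t0 \<bullet> dj = 0"
  proof -
    have "((\<lambda>s. \<beta>' s \<bullet> dj) has_real_derivative (\<beta>' t0 \<bullet> 0 + \<beta>'' t0 \<bullet> dj)) (at t0)"
      using vd_inner[OF conjunct1[OF conjunct2[OF conjunct2[OF G[OF t0]]]] has_vector_derivative_const] .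
    then show ?thesis using deriv_zero_local[OF _ assms(5) t0 d1] by simp
  qed
  have n1: "\<forall>s\<in>I. \<beta> s \<bullet> \<beta> s = 1" using sph by (simp add: dot_square_norm)
  have e1: "\<forall>s\<in>I. \<beta> s \<bullet> \<beta>' s = 0"
  proof
    fix s assume s: "s \<in> I"
    have D: "(\<beta> has_vector_derivative \<beta>' s) (at s)" using G[OF s] by blast
    have "((\<lambda>s. \<beta> s \<bullet> \<beta> s) has_real_derivative (\<beta> s \<bullet> \<beta>' s + \<beta>' s \<bullet> \<beta> s)) (at s)"
      using vd_inner[OF D D] .
    then have "\<beta> s \<bullet> \<beta>' s + \<beta>' s \<bullet> \<beta> s = 0" using deriv_zero_local[OF _ assms(5) s n1] by blast
    then show "\<beta> s \<bullet> \<beta>' s = 0" by (simp add: inner_commute)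
  qed
  have e2: "\<beta> t0 \<bullet> \<beta>'' t0 + \<beta>' t0 \<bullet> \<beta>' t0 = 0"
  proof -
    have D: "(\<beta> has_vector_derivative \<beta>' t0) (at t0)" "(\<beta>' has_vector_derivative \<beta>'' t0) (at t0)"
      using G[OF t0] by blast+
    have "((\<lambda>s. \<beta> s \<bullet> \<beta>' s) has_real_derivative (\<beta> t0 \<bullet> \<beta>'' t0 + \<beta>' t0 \<bullet> \<beta>' t0)) (at t0)"
      using vd_inner[OF D] .
    then show ?thesis using deriv_zero_local[OF _ assms(5) t0 e1] by blast
  qed
  have orth: "\<And>v. v \<bullet> \<beta> t0 = 0 \<Longrightarrow> \<beta>'' t0 \<bullet> v = 0" using G[OF t0] by blast
  have "\<beta>'' t0 \<bullet> \<beta>'' t0 = 0"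
  proof -
    define x where "x = \<beta>'' t0"
    define v where "v = c *\<^sub>R x - (x \<bullet> \<beta> t0) *\<^sub>R dj"
    have "dj \<bullet> \<beta> t0 = c" using bc t0 by (simp add: inner_commute)
    then have "v \<bullet> \<beta> t0 = 0" unfolding v_def
      by (simp add: inner_diff_left)
    then have "\<beta>'' t0 \<bullet> v = 0" by (rule orth)
    then have "c * (\<beta>'' t0 \<bullet> x) = 0" using d2 unfolding v_def by (simp add: inner_diff_right)
    then show ?thesis using \<open>c \<noteq> 0\<close> x_def by simp
  qed
  then have "\<beta>'' t0 = 0" by simp
  then have "\<beta>' t0 = 0" using e2 by simp
  then show False using G[OF t0] by blast
qed

end
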